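(* Let $\Sigma$ be a finite alphabet, $m,n$ positive integers with $m\le n$, $u,v\in\Sigma^\star$, and $r\in R_{m,n}(u)\cap R_{m,n}(v)$. Let $i_1,i_2\in[1,|u|]$, $j_1,j_2\in[1,|v|]$ with $\operatorname{ord}(r(u),i_1)\ne\operatorname{ord}(r(v),j_1)$. Then Samson has a winning strategy in the game $\mathrm{FO}^2_{m,n}((u,i_1,i_2),(v,j_1,j_2))$. Moreover, Samson has such a winning strategy whose first move is on $u$ if either $r$ ends with $\triangleright$, $r(u)\le i_1$ and $r(v)\ge j_1$, or $r$ ends with $\triangleleft$, $r(u)\ge i_1$ and $r(v)\le j_1$; and he has such a winning strategy whose first move is on $v$ if either $r$ ends with $\triangleright$, $r(u)\ge i_1$ and $r(v)\le j_1$, or $r$ ends with $\triangleleft$, $r(u)\le i_1$ and $r(v)\ge j_1$.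
   Context: Game $\mathrm{FO}^2_{m,n}((u,i_1,i_2),(v,j_1,j_2))$: pebble pair $x$ starts on $i_1$ in $u$ and $j_1$ in $v$, pair $y$ on $i_2$ in $u$ and $j_2$ in $v$. In each of $n$ rounds Samson picks $z\in\{x,y\}$ and places a $z$-pebble on a position of one of the words; Delilah places the mate on a position of the other word. Samson may change the word he plays on at most $m-1$ times. Samson wins if initially or after some round the map $x^u\mapsto x^v$, $y^u\mapsto y^v$ is not a partial isomorphism (pebbled letters differ or $\operatorname{ord}(x^u,y^u)\ne\operatorname{ord}(x^v,y^v)$); otherwise Delilah wins. Boundary positions: $\triangleright_a(w)=\min\{i:w_i=a\}$, $\triangleleft_a(w)=\max\{i:w_i=a\}$, $\triangleright_a(w,q)=\min\{i\in[q+1,|w|]:w_i=a\}$, $\triangleleft_a(w,q)=\max\{i\in[1,q-1]:w_i=a\}$ (undefined if empty); $\triangleright,\triangleleft$ are directions. An $n$-ranker is a sequence $r=(p_1,\dots,p_n)$ of boundary positions with $r(w)=p_1(w)$ if $n=1$, undefined if $(p_1,\dots,p_{n-1})(w)$ is undefined, else $p_n(w,(p_1,\dots,p_{n-1})(w))$; it ends with the direction of $p_n$. An $(m,n)$-ranker is an $n$-ranker whose directions form exactly $m$ maximal blocks of equal direction; $R_{m,n}(w)$ is the set of $(m,n)$-rankers defined over $w$. $\operatorname{ord}(i,j)\in\{<,=,>\}$ is the order type. *)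

theory Defs
  imports Main
begin

(* Words are lists over a finite alphabet 'a; positions are 1-based: the letter
   at position i of w is w ! (i - 1), for i in {1..length w}. *)

definition letter :: "'a list \<Rightarrow> nat \<Rightarrow> 'a" where
  "letter w i = w ! (i - 1)"

(* directions: Rt = \<triangleright> (next occurrence to the right), Lt = \<triangleleft> *)
datatype dir = Rt | Lt

type_synonym 'a bpos = "dir \<times> 'a"

definition bpos_first :: "'a bpos \<Rightarrow> 'a list \<Rightarrow> nat option" where
  "bpos_first p w = (case p of
      (Rt, a) \<Rightarrow> (if {i \<in> {1..length w}. letter w i = a} = {} then None
                   else Some (Min {i \<in> {1..length w}. letter w i = a}))
    | (Lt, a) \<Rightarrow> (if {i \<in> {1..length w}. letter w i = a} = {} then None
                   else Some (Max {i \<in> {1..length w}. letter w i = a})))"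

definition bpos_step :: "'a bpos \<Rightarrow> 'a list \<Rightarrow> nat \<Rightarrow> nat option" where
  "bpos_step p w q = (case p of
      (Rt, a) \<Rightarrow> (if {i \<in> {q+1..length w}. letter w i = a} = {} then None
                   else Some (Min {i \<in> {q+1..length w}. letter w i = a}))
    | (Lt, a) \<Rightarrow> (if {i \<in> {1..q-1}. letter w i = a} = {} then None
                   else Some (Max {i \<in> {1..q-1}. letter w i = a})))"

fun ranker_from :: "'a bpos list \<Rightarrow> 'a list \<Rightarrow> nat \<Rightarrow> nat option" where
  "ranker_from [] w q = Some q"
| "ranker_from (p # ps) w q =
     (case bpos_step p w q of None \<Rightarrow> None | Some q' \<Rightarrow> ranker_from ps w q')"

fun ranker_eval :: "'a bpos list \<Rightarrow> 'a list \<Rightarrow> nat option" where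
  "ranker_eval [] w = None"
| "ranker_eval (p # ps) w =
     (case bpos_first p w of None \<Rightarrow> None | Some q \<Rightarrow> ranker_from ps w q)"

definition num_blocks :: "'a bpos list \<Rightarrow> nat" where
  "num_blocks r = (if r = [] then 0
     else Suc (card {i. Suc i < length r \<and> fst (r ! i) \<noteq> fst (r ! Suc i)}))"

definition is_mn_ranker :: "nat \<Rightarrow> nat \<Rightarrow> 'a bpos list \<Rightarrow> bool" where
  "is_mn_ranker m n r \<longleftrightarrow> length r = n \<and> num_blocks r = m"

definition R_mn :: "nat \<Rightarrow> nat \<Rightarrow> 'a list \<Rightarrow> 'a bpos list set" where
  "R_mn m n w = {r. is_mn_ranker m n r \<and> ranker_eval r w \<noteq> None}"

definition ends_with :: "'a bpos list \<Rightarrow> dir" where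
  "ends_with r = fst (last r)"

datatype ordt = OLess | OEq | OGreater

definition ord_type :: "nat \<Rightarrow> nat \<Rightarrow> ordt" where
  "ord_type i j = (if i < j then OLess else if i = j then OEq else OGreater)"

datatype side = SU | SV   (* playing on u / on v *)
datatype pebble = PX | PY

(* configuration (i1, i2, j1, j2): x on i1 in u and j1 in v, y on i2 in u and j2 in v *)
type_synonym config = "nat \<times> nat \<times> nat \<times> nat"

definition piso :: "'a list \<Rightarrow> 'a list \<Rightarrow> config \<Rightarrow> bool" where
  "piso u v c = (case c of (i1, i2, j1, j2) \<Rightarrow>
      letter u i1 = letter v j1 \<and> letter u i2 = letter v j2 \<and>
      ord_type i1 i2 = ord_type j1 j2)"

(* Samson places pebble z on position p of the word given by s; Delilah answers
   with the mate at position q in the other word. *)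
definition move :: "side \<Rightarrow> pebble \<Rightarrow> nat \<Rightarrow> nat \<Rightarrow> config \<Rightarrow> config" where
  "move s z p q c = (case c of (i1, i2, j1, j2) \<Rightarrow>
     (case (s, z) of
        (SU, PX) \<Rightarrow> (p, i2, q, j2)
      | (SU, PY) \<Rightarrow> (i1, p, j1, q)
      | (SV, PX) \<Rightarrow> (q, i2, p, j2)
      | (SV, PY) \<Rightarrow> (i1, q, j1, p)))"

definition word_of :: "'a list \<Rightarrow> 'a list \<Rightarrow> side \<Rightarrow> 'a list" where
  "word_of u v s = (case s of SU \<Rightarrow> u | SV \<Rightarrow> v)"

definition other :: "side \<Rightarrow> side" where
  "other s = (case s of SU \<Rightarrow> SV | SV \<Rightarrow> SU)"

(* playing on side s is allowed given the remaining number of word changes sw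
   and the side of the previous move (None before the first move) *)
definition can_play :: "nat \<Rightarrow> side option \<Rightarrow> side \<Rightarrow> bool" where
  "can_play sw prev s \<longleftrightarrow> prev = None \<or> prev = Some s \<or> 0 < sw"

definition new_sw :: "nat \<Rightarrow> side option \<Rightarrow> side \<Rightarrow> nat" where
  "new_sw sw prev s = (if prev = None \<or> prev = Some s then sw else sw - 1)"

(* win u v k sw prev c: Samson has a winning strategy when k rounds remain,
   he may still change the word at most sw times, and prev is the word of his
   previous move. *)
fun win :: "'a list \<Rightarrow> 'a list \<Rightarrow> nat \<Rightarrow> nat \<Rightarrow> side option \<Rightarrow> config \<Rightarrow> bool" where
  "win u v 0 sw prev c = (\<not> piso u v c)"
| "win u v (Suc k) sw prev c =
     (\<not> piso u v c \<or>
      (\<exists>s z p. can_play sw prev s \<and> p \<in> {1..length (word_of u v s)} \<and>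
         (\<forall>q \<in> {1..length (word_of u v (other s))}.
             win u v k (new_sw sw prev s) (Some s) (move s z p q c))))"

definition samson_wins :: "nat \<Rightarrow> nat \<Rightarrow> 'a list \<Rightarrow> nat \<Rightarrow> nat \<Rightarrow> 'a list \<Rightarrow> nat \<Rightarrow> nat \<Rightarrow> bool" where
  "samson_wins m n u i1 i2 v j1 j2 = win u v n (m - 1) None (i1, i2, j1, j2)"

(* Samson has a winning strategy in FO^2_{m,n}((u,i1,i2),(v,j1,j2)) whose first
   move is on the word given by s (if the initial configuration already is not a
   partial isomorphism, he has won before moving). *)
definition samson_wins_first :: "side \<Rightarrow> nat \<Rightarrow> nat \<Rightarrow> 'a list \<Rightarrow> nat \<Rightarrow> nat \<Rightarrow> 'a list \<Rightarrow> nat \<Rightarrow> nat \<Rightarrow> bool" where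
  "samson_wins_first s m n u i1 i2 v j1 j2 =
     (\<not> piso u v (i1, i2, j1, j2) \<or>
      (\<exists>k. n = Suc k \<and>
        (\<exists>z p. p \<in> {1..length (word_of u v s)} \<and>
          (\<forall>q \<in> {1..length (word_of u v (other s))}.
             win u v k (m - 1) (Some s) (move s z p q (i1, i2, j1, j2))))))"

end

theory Submission
  imports Defs
begin


lemma step_Rt:
  assumes "bpos_step (Rt,a) w q = Some x"
  shows "q < x \<and> x \<le> length w \<and> letter w x = a \<and> (\<forall>y. q < y \<and> y \<le> length w \<and> letter w y = a \<longrightarrow> x \<le> y)"
proof -
  let ?S = "{i \<in> {q+1..length w}. letter w i = a}"
  have ne: "?S \<noteq> {}" and x: "x = Min ?S" using assms by (auto simp: bpos_step_def split: if_splits)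
  have f: "finite ?S" by simp
  have "x \<in> ?S" using Min_in[OF f ne] x by simp
  moreover have "\<forall>y. q < y \<and> y \<le> length w \<and> letter w y = a \<longrightarrow> x \<le> y"
    using Min_le[OF f] x by auto
  ultimately show ?thesis by auto
qed

lemma step_Lt:
  assumes "bpos_step (Lt,a) w q = Some x"
  shows "1 \<le> x \<and> x < q \<and> letter w x = a \<and> (\<forall>y. 1 \<le> y \<and> y < q \<and> letter w y = a \<longrightarrow> y \<le> x)"
proof -
  let ?S = "{i \<in> {1..q-1}. letter w i = a}"
  have ne: "?S \<noteq> {}" and x: "x = Max ?S" using assms by (auto simp: bpos_step_def split: if_splits)
  have f: "finite ?S" by simp
  have "x \<in> ?S" using Max_in[OF f ne] x by simp
  moreover have "\<forall>y. 1 \<le> y \<and> y < q \<and> letter w y = a \<longrightarrow> y \<le> x"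
    using Max_ge[OF f] x by auto
  ultimately show ?thesis by auto
qed

definition st :: "dir \<Rightarrow> 'a list \<Rightarrow> nat" where
  "st d w = (case d of Rt \<Rightarrow> 0 | Lt \<Rightarrow> Suc (length w))"

lemma first_st: "bpos_first p w = bpos_step p w (st (fst p) w)"
  by (cases p; cases "fst p") (auto simp: bpos_first_def bpos_step_def st_def)

lemma ranker_from_snoc:
  "ranker_from (ps @ [p]) w q = (case ranker_from ps w q of None \<Rightarrow> None | Some q' \<Rightarrow> bpos_step p w q')"
  by (induction ps arbitrary: q) (auto split: option.splits)

lemma ranker_eval_single: "ranker_eval [p] w = bpos_step p w (st (fst p) w)"
  by (simp add: first_st split: option.splits)

lemma ranker_eval_snoc:
  "r \<noteq> [] \<Longrightarrow> ranker_eval (r @ [p]) w = (case ranker_eval r w of None \<Rightarrow> None | Some q \<Rightarrow> bpos_step p w q)"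
  by (cases r) (auto simp: ranker_from_snoc split: option.splits)

lemma step_range:
  assumes "bpos_step p w q = Some x" "q \<le> Suc (length w)"
  shows "1 \<le> x \<and> x \<le> length w"
proof (cases p)
  case (Pair d a) then show ?thesis using assms step_Rt[of a w q x] step_Lt[of a w q x]
    by (cases d) auto
qed

lemma ranker_range: "ranker_eval r w = Some x \<Longrightarrow> 1 \<le> x \<and> x \<le> length w"
proof (induction r arbitrary: x rule: rev_induct)
  case Nil then show ?case by simp
next
  case (snoc p r)
  show ?case
  proof (cases "r = []")
    case True
    then show ?thesis using snoc.prems ranker_eval_single[of p w] step_range[of p w "st (fst p) w" x]
      by (auto simp: st_def split: dir.splits)
  next
    case False
    then obtain q where q: "ranker_eval r w = Some q" "bpos_step p w q = Some x"
      using snoc.prems ranker_eval_snoc[of r p w] by (auto split: option.splits)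
    then show ?thesis using snoc.IH[OF q(1)] step_range[of p w q x] by auto
  qed
qed

lemma num_blocks_snoc:
  assumes "r \<noteq> []"
  shows "num_blocks (r @ [p]) = num_blocks r + (if fst (last r) = fst p then 0 else 1)"
proof -
  let ?S = "\<lambda>r::'a bpos list. {i. Suc i < length r \<and> fst (r ! i) \<noteq> fst (r ! Suc i)}"
  have eq: "?S (r @ [p]) = ?S r \<union> (if fst (last r) = fst p then {} else {length r - 1})"
  proof -
    have "i \<in> ?S (r @ [p]) \<longleftrightarrow> i \<in> ?S r \<union> (if fst (last r) = fst p then {} else {length r - 1})" for i
    proof (cases "Suc i < length r")
      case True then show ?thesis by (auto simp: nth_append)
    next
      case False
      show ?thesis
      proof (cases "Suc i = length r")
        case True
        then have i: "i = length r - 1" by simp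
        show ?thesis using assms True unfolding i by (auto simp: nth_append last_conv_nth)
      next
        case False
        then show ?thesis using assms \<open>\<not> Suc i < length r\<close> by auto
      qed
    qed
    then show ?thesis by blast
  qed
  have fin: "finite (?S r)" by (rule finite_subset[of _ "{..<length r}"]) auto
  have nin: "length r - 1 \<notin> ?S r" using assms by auto
  show ?thesis using assms fin nin unfolding num_blocks_def eq by auto
qed




definition swp :: "config \<Rightarrow> config" where
  "swp c = (case c of (i1, i2, j1, j2) \<Rightarrow> (i2, i1, j2, j1))"

definition flipz :: "pebble \<Rightarrow> pebble" where
  "flipz z = (case z of PX \<Rightarrow> PY | PY \<Rightarrow> PX)"

lemma piso_swp: "piso u v (swp c) = piso u v c"
  by (cases c) (auto simp: piso_def swp_def ord_type_def)

lemma move_swp: "move s z p q (swp c) = swp (move s (flipz z) p q c)"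
  by (cases c; cases s; cases z) (auto simp: move_def swp_def flipz_def)

lemma win_swp: "win u v k sw prev (swp c) \<Longrightarrow> win u v k sw prev c"
proof (induction k arbitrary: sw prev c)
  case 0 then show ?case by (simp add: piso_swp)
next
  case (Suc k)
  show ?case
  proof (cases "piso u v (swp c)")
    case False then show ?thesis by (simp add: piso_swp)
  next
    case True
    then obtain s z p where sp: "can_play sw prev s" "p \<in> {1..length (word_of u v s)}"
      "\<forall>q \<in> {1..length (word_of u v (other s))}. win u v k (new_sw sw prev s) (Some s) (move s z p q (swp c))"
      using Suc.prems by auto
    have "\<forall>q \<in> {1..length (word_of u v (other s))}. win u v k (new_sw sw prev s) (Some s) (move s (flipz z) p q c)"
      using sp(3) Suc.IH by (auto simp: move_swp)
    then show ?thesis using sp(1,2) by auto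
  qed
qed

definition first :: "'a list \<Rightarrow> 'a list \<Rightarrow> side \<Rightarrow> nat \<Rightarrow> nat \<Rightarrow> config \<Rightarrow> bool" where
  "first u v s k sw c = (\<not> piso u v c \<or> (\<exists>z p. p \<in> {1..length (word_of u v s)} \<and>
     (\<forall>q \<in> {1..length (word_of u v (other s))}. win u v k sw (Some s) (move s z p q c))))"

lemma first_swp: "first u v s k sw (swp c) \<Longrightarrow> first u v s k sw c"
proof -
  assume a: "first u v s k sw (swp c)"
  show ?thesis
  proof (cases "piso u v c")
    case False then show ?thesis by (simp add: first_def)
  next
    case True
    then obtain z p where zp: "p \<in> {1..length (word_of u v s)}"
      "\<forall>q \<in> {1..length (word_of u v (other s))}. win u v k sw (Some s) (move s z p q (swp c))"
      using a by (auto simp: first_def piso_swp)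
    then have "\<forall>q \<in> {1..length (word_of u v (other s))}. win u v k sw (Some s) (move s (flipz z) p q c)"
      using win_swp[of u v k sw "Some s"] by (simp add: move_swp)
    then show ?thesis using zp(1) unfolding first_def by blast
  qed
qed

lemma first_to_win:
  assumes "first u v s' k sw' c" "(s' = s \<and> sw = sw') \<or> (s' \<noteq> s \<and> sw = Suc sw')"
  shows "win u v (Suc k) sw (Some s) c"
proof (cases "piso u v c")
  case False then show ?thesis by simp
next
  case True
  then obtain z p where zp: "p \<in> {1..length (word_of u v s')}"
      "\<forall>q \<in> {1..length (word_of u v (other s'))}. win u v k sw' (Some s') (move s' z p q c)"
      using assms(1) by (auto simp: first_def)
  have "can_play sw (Some s) s'" "new_sw sw (Some s) s' = sw'"
    using assms(2) by (auto simp: can_play_def new_sw_def)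
  then show ?thesis using zp by (simp only: win.simps) blast
qed

lemma first_to_win_None:
  assumes "first u v s k sw c"
  shows "win u v (Suc k) sw None c"
  using assms unfolding first_def
  by (auto simp: can_play_def new_sw_def)


definition cat :: "side \<Rightarrow> dir \<Rightarrow> nat \<Rightarrow> nat \<Rightarrow> nat \<Rightarrow> nat \<Rightarrow> bool" where
  "cat s d ru i1 rv j1 = (case s of
      SU \<Rightarrow> (d = Rt \<and> ru \<le> i1 \<and> j1 \<le> rv) \<or> (d = Lt \<and> i1 \<le> ru \<and> rv \<le> j1)
    | SV \<Rightarrow> (d = Rt \<and> i1 \<le> ru \<and> rv \<le> j1) \<or> (d = Lt \<and> ru \<le> i1 \<and> j1 \<le> rv))"

definition rel :: "dir \<Rightarrow> side \<Rightarrow> nat \<Rightarrow> nat \<Rightarrow> nat \<Rightarrow> nat \<Rightarrow> bool" where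
  "rel d s qu yu qv yv = (case (d, s) of
      (Rt, SU) \<Rightarrow> qu < yu \<and> yv \<le> qv
    | (Lt, SU) \<Rightarrow> yu < qu \<and> qv \<le> yv
    | (Rt, SV) \<Rightarrow> yu \<le> qu \<and> qv < yv
    | (Lt, SV) \<Rightarrow> qu \<le> yu \<and> yv < qv)"

lemma core:
  assumes "bpos_step (d,a) u qu = Some ru" "bpos_step (d,a) v qv = Some rv"
    "ord_type ru i1 \<noteq> ord_type rv j1" "cat s d ru i1 rv j1"
    "yu = (if s = SU then ru else q)" "yv = (if s = SU then q else rv)"
    "q \<in> {1..length (word_of u v (other s))}"
    "letter u yu = letter v yv" "ord_type i1 yu = ord_type j1 yv"
  shows "rel d s qu yu qv yv"
proof (cases d)
  case Rt
  note U = step_Rt[OF assms(1)[unfolded Rt]] and V = step_Rt[OF assms(2)[unfolded Rt]]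
  show ?thesis
  proof (cases s)
    case SU
    have q: "1 \<le> q" "q \<le> length v" "letter v q = a" using assms SU U by (auto simp: word_of_def other_def)
    have "q < rv" using assms(3,4,9) SU Rt by (auto simp: assms(5,6) ord_type_def cat_def split: if_splits)
    moreover have "\<not> qv < q"
    proof
      assume "qv < q"
      then have "rv \<le> q" using V q by blast
      then show False using \<open>q < rv\<close> by simp
    qed
    ultimately have "q \<le> qv" by simp
    then show ?thesis using U SU Rt assms(5,6) by (auto simp: rel_def)
  next
    case SV
    have q: "1 \<le> q" "q \<le> length u" "letter u q = a" using assms SV V by (auto simp: word_of_def other_def)
    have "q < ru" using assms(3,4,9) SV Rt by (auto simp: assms(5,6) ord_type_def cat_def split: if_splits)
    moreover have "\<not> qu < q"
    proof
      assume "qu < q"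
      then have "ru \<le> q" using U q by blast
      then show False using \<open>q < ru\<close> by simp
    qed
    ultimately have "q \<le> qu" by simp
    then show ?thesis using V SV Rt assms(5,6) by (auto simp: rel_def)
  qed
next
  case Lt
  note U = step_Lt[OF assms(1)[unfolded Lt]] and V = step_Lt[OF assms(2)[unfolded Lt]]
  show ?thesis
  proof (cases s)
    case SU
    have q: "1 \<le> q" "q \<le> length v" "letter v q = a" using assms SU U by (auto simp: word_of_def other_def)
    have "rv < q" using assms(3,4,9) SU Lt by (auto simp: assms(5,6) ord_type_def cat_def split: if_splits)
    moreover have "\<not> q < qv"
    proof
      assume "q < qv"
      then have "q \<le> rv" using V q by blast
      then show False using \<open>rv < q\<close> by simp
    qed
    ultimately have "qv \<le> q" by simp
    then show ?thesis using U SU Lt assms(5,6) by (auto simp: rel_def)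
  next
    case SV
    have q: "1 \<le> q" "q \<le> length u" "letter u q = a" using assms SV V by (auto simp: word_of_def other_def)
    have "ru < q" using assms(3,4,9) SV Lt by (auto simp: assms(5,6) ord_type_def cat_def split: if_splits)
    moreover have "\<not> q < qu"
    proof
      assume "q < qu"
      then have "q \<le> ru" using U q by blast
      then show False using \<open>ru < q\<close> by simp
    qed
    ultimately have "qu \<le> q" by simp
    then show ?thesis using V SV Lt assms(5,6) by (auto simp: rel_def)
  qed
qed

lemma rel_next:
  assumes "rel d s qu yu qv yv"
  shows "ord_type qu yu \<noteq> ord_type qv yv \<and> cat (if d' = d then s else other s) d' qu yu qv yv"
  using assms by (cases d; cases d'; cases s) (auto simp: rel_def cat_def other_def ord_type_def)


lemma win_notpiso: "\<not> piso u v c \<Longrightarrow> win u v k sw prev c"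
  by (cases k) auto

lemma move_lemma:
  assumes "bpos_step (d,a) u qu = Some ru" "bpos_step (d,a) v qv = Some rv"
    "1 \<le> ru" "ru \<le> length u" "1 \<le> rv" "rv \<le> length v"
    "ord_type ru i1 \<noteq> ord_type rv j1" "cat s d ru i1 rv j1"
    "\<And>yu yv. 1 \<le> yu \<Longrightarrow> yu \<le> length u \<Longrightarrow> 1 \<le> yv \<Longrightarrow> yv \<le> length v \<Longrightarrow>
       rel d s qu yu qv yv \<Longrightarrow> piso u v (i1,yu,j1,yv) \<Longrightarrow> win u v k sw (Some s) (i1,yu,j1,yv)"
  shows "first u v s k sw (i1,i2,j1,j2)"
proof -
  define pos where "pos = (if s = SU then ru else rv)"
  have pos: "pos \<in> {1..length (word_of u v s)}" using assms(3-6)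
    by (cases s) (auto simp: pos_def word_of_def)
  have "win u v k sw (Some s) (move s PY pos q (i1,i2,j1,j2))"
    if q: "q \<in> {1..length (word_of u v (other s))}" for q
  proof -
    define yu where "yu = (if s = SU then ru else q)"
    define yv where "yv = (if s = SU then q else rv)"
    have mv: "move s PY pos q (i1,i2,j1,j2) = (i1,yu,j1,yv)"
      by (cases s) (auto simp: move_def pos_def yu_def yv_def)
    have ry: "1 \<le> yu" "yu \<le> length u" "1 \<le> yv" "yv \<le> length v"
      using q assms(3-6) by (cases s; auto simp: yu_def yv_def word_of_def other_def)+
    show ?thesis
    proof (cases "piso u v (i1,yu,j1,yv)")
      case False then show ?thesis using mv win_notpiso by metis
    next
      case True
      then have "letter u yu = letter v yv" "ord_type i1 yu = ord_type j1 yv"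
        by (auto simp: piso_def)
      then have "rel d s qu yu qv yv"
        using core[OF assms(1,2,7,8) yu_def yv_def q] by blast
      then show ?thesis using assms(9)[OF ry] True mv by simp
    qed
  qed
  then show ?thesis unfolding first_def using pos by blast
qed

lemma main:
  "length r = Suc k \<Longrightarrow> ranker_eval r u = Some ru \<Longrightarrow> ranker_eval r v = Some rv \<Longrightarrow>
   ord_type ru i1 \<noteq> ord_type rv j1 \<Longrightarrow> cat s (ends_with r) ru i1 rv j1 \<Longrightarrow>
   first u v s k (num_blocks r - 1) (i1,i2,j1,j2)"
proof (induction k arbitrary: r ru rv i1 i2 j1 j2 s)
  case 0
  then obtain d a where r: "r = [(d,a)]" by (cases r) auto
  have "ranker_eval [(d,a)] u = Some ru" "ranker_eval [(d,a)] v = Some rv"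
    using "0.prems"(2,3) r by (simp_all del: ranker_eval.simps)
  then have U: "bpos_step (d,a) u (st d u) = Some ru" and V: "bpos_step (d,a) v (st d v) = Some rv"
    by (simp_all only: ranker_eval_single fst_conv)
  have ends: "ends_with r = d" using r by (simp add: ends_with_def)
  show ?case
  proof (rule move_lemma[OF U V])
    show "1 \<le> ru" "ru \<le> length u" using ranker_range[OF "0.prems"(2)] by auto
    show "1 \<le> rv" "rv \<le> length v" using ranker_range[OF "0.prems"(3)] by auto
    show "ord_type ru i1 \<noteq> ord_type rv j1" by fact
    show "cat s d ru i1 rv j1" using "0.prems"(5) ends by simp
    fix yu yv assume "1 \<le> yu" "yu \<le> length u" "1 \<le> yv" "yv \<le> length v"
      "rel d s (st d u) yu (st d v) yv"
    then have False by (cases d; cases s) (auto simp: rel_def st_def)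
    then show "win u v 0 (num_blocks r - 1) (Some s) (i1, yu, j1, yv)" by simp
  qed
next
  case (Suc k)
  obtain r0 p where r: "r = r0 @ [p]" using Suc.prems(1)
    unfolding length_Suc_conv_rev by blast
  obtain d a where p: "p = (d,a)" by (cases p) auto
  have len0: "length r0 = Suc k" using Suc.prems(1) r by simp
  then have ne: "r0 \<noteq> []" by auto
  have "ranker_eval (r0 @ [(d,a)]) u = Some ru" using Suc.prems(2) r p by (simp only:)
  then have "(case ranker_eval r0 u of None \<Rightarrow> None | Some q \<Rightarrow> bpos_step (d,a) u q) = Some ru"
    by (simp only: ranker_eval_snoc[OF ne])
  then obtain qu where qu: "ranker_eval r0 u = Some qu" "bpos_step (d,a) u qu = Some ru"
    by (cases "ranker_eval r0 u") auto
  have "ranker_eval (r0 @ [(d,a)]) v = Some rv" using Suc.prems(3) r p by (simp only:)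
  then have "(case ranker_eval r0 v of None \<Rightarrow> None | Some q \<Rightarrow> bpos_step (d,a) v q) = Some rv"
    by (simp only: ranker_eval_snoc[OF ne])
  then obtain qv where qv: "ranker_eval r0 v = Some qv" "bpos_step (d,a) v qv = Some rv"
    by (cases "ranker_eval r0 v") auto
  have ends: "ends_with r = d" using r p by (simp add: ends_with_def)
  define d' where "d' = ends_with r0"
  define s' where "s' = (if d' = d then s else other s)"
  have nb: "num_blocks r = num_blocks r0 + (if d' = d then 0 else 1)"
    using num_blocks_snoc[OF ne, of p] r p by (simp add: d'_def ends_with_def)
  have nb0: "num_blocks r0 \<ge> 1" using ne by (simp add: num_blocks_def)
  show ?case
  proof (rule move_lemma[OF qu(2) qv(2)])
    show "1 \<le> ru" "ru \<le> length u" using ranker_range[OF Suc.prems(2)] by auto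
    show "1 \<le> rv" "rv \<le> length v" using ranker_range[OF Suc.prems(3)] by auto
    show "ord_type ru i1 \<noteq> ord_type rv j1" by fact
    show "cat s d ru i1 rv j1" using Suc.prems(5) ends by simp
    fix yu yv assume "1 \<le> yu" "yu \<le> length u" "1 \<le> yv" "yv \<le> length v"
      and rl: "rel d s qu yu qv yv"
    have nx: "ord_type qu yu \<noteq> ord_type qv yv" "cat s' d' qu yu qv yv"
      using rel_next[OF rl, of d'] by (auto simp: s'_def)
    have c0: "cat s' (ends_with r0) qu yu qv yv" using nx(2) by (simp only: d'_def)
    have "first u v s' k (num_blocks r0 - 1) (yu, i1, yv, j1)"
      by (rule Suc.IH[OF len0 qu(1) qv(1) nx(1) c0])
    moreover have "swp (i1, yu, j1, yv) = (yu, i1, yv, j1)" by (simp add: swp_def)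
    ultimately have f: "first u v s' k (num_blocks r0 - 1) (i1, yu, j1, yv)"
      using first_swp by metis
    have "(s' = s \<and> num_blocks r - 1 = num_blocks r0 - 1) \<or> (s' \<noteq> s \<and> num_blocks r - 1 = Suc (num_blocks r0 - 1))"
    proof (cases "d' = d")
      case True
      then have "s' = s" "num_blocks r = num_blocks r0" using nb by (simp_all add: s'_def)
      then show ?thesis by simp
    next
      case False
      then have "s' = other s" "num_blocks r = Suc (num_blocks r0)" using nb by (simp_all add: s'_def)
      moreover have "other s \<noteq> s" by (cases s) (simp_all add: other_def)
      ultimately show ?thesis using nb0 by simp
    qed
    then show "win u v (Suc k) (num_blocks r - 1) (Some s) (i1, yu, j1, yv)"
      by (rule first_to_win[OF f])
  qed
qed


lemma cat_some: "ord_type ru i1 \<noteq> ord_type rv j1 \<Longrightarrow> cat SU d ru i1 rv j1 \<or> cat SV d ru i1 rv j1"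
  by (cases d) (auto simp: cat_def ord_type_def split: if_splits)

lemma first_swf: "n = Suc k \<Longrightarrow> first u v s k (m - 1) (i1,i2,j1,j2) \<Longrightarrow> samson_wins_first s m n u i1 i2 v j1 j2"
  unfolding first_def samson_wins_first_def by blast

theorem lemma4p2:
  fixes u v :: "'a::finite list" and r :: "'a bpos list"
    and m n i1 i2 j1 j2 :: nat
  assumes "1 \<le> m" and "m \<le> n"
    and "r \<in> R_mn m n u \<inter> R_mn m n v"
    and "i1 \<in> {1..length u}" and "i2 \<in> {1..length u}"
    and "j1 \<in> {1..length v}" and "j2 \<in> {1..length v}"
    and "ord_type (the (ranker_eval r u)) i1 \<noteq> ord_type (the (ranker_eval r v)) j1"
  shows "samson_wins m n u i1 i2 v j1 j2
    \<and> ((ends_with r = Rt \<and> the (ranker_eval r u) \<le> i1 \<and> the (ranker_eval r v) \<ge> j1) \<or>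
        (ends_with r = Lt \<and> the (ranker_eval r u) \<ge> i1 \<and> the (ranker_eval r v) \<le> j1)
        \<longrightarrow> samson_wins_first SU m n u i1 i2 v j1 j2)
    \<and> ((ends_with r = Rt \<and> the (ranker_eval r u) \<ge> i1 \<and> the (ranker_eval r v) \<le> j1) \<or>
        (ends_with r = Lt \<and> the (ranker_eval r u) \<le> i1 \<and> the (ranker_eval r v) \<ge> j1)
        \<longrightarrow> samson_wins_first SV m n u i1 i2 v j1 j2)"
proof -
  obtain k where k: "n = Suc k" using assms(1,2) by (cases n) auto
  have len: "length r = Suc k" and nb: "num_blocks r = m"
    using assms(3) k by (auto simp: R_mn_def is_mn_ranker_def)
  obtain ru where ru: "ranker_eval r u = Some ru" using assms(3) by (auto simp: R_mn_def)
  obtain rv where rv: "ranker_eval r v = Some rv" using assms(3) by (auto simp: R_mn_def)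
  have od: "ord_type ru i1 \<noteq> ord_type rv j1" using assms(8) ru rv by simp
  have F: "cat s (ends_with r) ru i1 rv j1 \<Longrightarrow> samson_wins_first s m n u i1 i2 v j1 j2" for s
    using main[OF len ru rv od, of s i2 j2] nb first_swf[OF k] by simp
  have W: "samson_wins m n u i1 i2 v j1 j2"
  proof -
    obtain s where "cat s (ends_with r) ru i1 rv j1" using cat_some[OF od] by blast
    then have "first u v s k (m - 1) (i1,i2,j1,j2)" using main[OF len ru rv od, of s i2 j2] nb by simp
    then show ?thesis unfolding samson_wins_def k by (rule first_to_win_None)
  qed
  show ?thesis using W F[of SU] F[of SV] ru rv by (auto simp: cat_def)
qed

end
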